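(* For every $d \geq 2$, let $N(d)$ be the maximum number of mutually unbiased bases in $\mathbb{C}^d$ and let \[ B(d) = \inf\Big\{ h(\bm I) : h \in C_{\succeq 0}(U(d)) \text{ real-valued},\; h(\bm H) \leq 0 \text{ for all } \bm H \in H(d),\; \textstyle\int h\, d\nu = 1\Big\}. \] Then $N(d) \leq B(d)$.
   Context: $U(d)$ is the unitary group with identity $\bm I$ and Haar probability measure $\nu$. Orthonormal bases of $\mathbb{C}^d$ are mutually unbiased if for any two distinct bases $\mathcal B,\mathcal B'$ in the collection and any $\bm v\in\mathcal B$, $\bm w\in\mathcal B'$, $|\langle \bm v,\bm w\rangle| = 1/\sqrt d$. $H(d)$ is the set of unitary $\bm H$ with $|H_{ij}| = 1/\sqrt d$ for all $i,j$. A continuous $f$ on a compact group $G$ is positive definite ($f \in C_{\succeq 0}(G)$) if $\sum_{i,j=1}^n \overline{c_i} f(g_i^{-1}g_j) c_j \geq 0$ for all $n$, all $g_i \in G$ and $c_i \in \mathbb{C}$. *)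

theory Defs
  imports "HOL-Probability.Probability"
begin

text \<open>Matrices in C^{d x d} are rendered as complex^'n^'n with d = CARD('n).\<close>

definition adj :: "complex^'n^'n \<Rightarrow> complex^'n^'n" where
  "adj A = (\<chi> i j. cnj (A $ j $ i))"

definition unitary_group :: "(complex^'n^'n) set" where
  "unitary_group = {U. adj U ** U = mat 1}"

definition hadamard_set :: "(complex^'n^'n) set" where
  "hadamard_set = {H \<in> unitary_group. \<forall>i j. cmod (H $ i $ j) = 1 / sqrt (real CARD('n))}"

definition cinner :: "complex^'n \<Rightarrow> complex^'n \<Rightarrow> complex" where
  "cinner v w = (\<Sum>i\<in>UNIV. cnj (v $ i) * w $ i)"

definition orthonormal_basis :: "(complex^'n) set \<Rightarrow> bool" where
  "orthonormal_basis B \<longleftrightarrow> finite B \<and> card B = CARD('n) \<and>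
     (\<forall>v\<in>B. \<forall>w\<in>B. cinner v w = (if v = w then 1 else 0))"

definition mutually_unbiased :: "(complex^'n) set set \<Rightarrow> bool" where
  "mutually_unbiased C \<longleftrightarrow> (\<forall>B\<in>C. orthonormal_basis B) \<and>
     (\<forall>B\<in>C. \<forall>B'\<in>C. B \<noteq> B' \<longrightarrow>
        (\<forall>v\<in>B. \<forall>w\<in>B'. cmod (cinner v w) = 1 / sqrt (real CARD('n))))"

definition max_mub :: "'n::finite itself \<Rightarrow> ereal" where
  "max_mub _ = Sup {ereal (real (card C)) | C :: (complex^'n) set set. finite C \<and> mutually_unbiased C}"

text \<open>Continuous positive definite functions on U(d) (values outside U(d) irrelevant).\<close>
definition pos_def_on_U :: "(complex^'n^'n \<Rightarrow> complex) \<Rightarrow> bool" where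
  "pos_def_on_U f \<longleftrightarrow> continuous_on unitary_group f \<and>
     (\<forall>(n::nat) (g :: nat \<Rightarrow> complex^'n^'n) (c :: nat \<Rightarrow> complex).
        (\<forall>i<n. g i \<in> unitary_group) \<longrightarrow>
        (let s = (\<Sum>i<n. \<Sum>j<n. cnj (c i) * f (adj (g i) ** g j) * c j)
         in Im s = 0 \<and> Re s \<ge> 0))"

definition haar_prob :: "(complex^'n^'n) measure \<Rightarrow> bool" where
  "haar_prob \<nu> \<longleftrightarrow> prob_space \<nu> \<and> sets \<nu> = sets borel \<and> emeasure \<nu> unitary_group = 1 \<and>
     (\<forall>g\<in>unitary_group. \<forall>A\<in>sets borel. emeasure \<nu> ((\<lambda>x. g ** x) -` A) = emeasure \<nu> A)"

definition B_bound :: "(complex^'n^'n) measure \<Rightarrow> ereal" where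
  "B_bound \<nu> = Inf {ereal (h (mat 1)) | h :: complex^'n^'n \<Rightarrow> real.
      pos_def_on_U (\<lambda>x. complex_of_real (h x)) \<and>
      (\<forall>H\<in>hadamard_set. h H \<le> 0) \<and> integral\<^sup>L \<nu> h = 1}"

end

theory Submission imports Defs begin

lemma adj_adj[simp]: "adj (adj A) = A"
  by (simp add: adj_def vec_eq_iff)

lemma adj_mult: "adj (A ** B) = adj B ** adj A"
  by (simp add: adj_def vec_eq_iff matrix_matrix_mult_def mult.commute)

lemma adj_mat1[simp]: "adj (mat 1) = mat 1"
  by (simp add: adj_def vec_eq_iff mat_def)

lemma unitary_right: "U \<in> unitary_group \<Longrightarrow> U ** adj U = mat 1"
  unfolding unitary_group_def using matrix_left_right_inverse by blast

lemma unitary_mat1[simp]: "mat 1 \<in> unitary_group"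
  by (simp add: unitary_group_def)

lemma unitary_mult: "A \<in> unitary_group \<Longrightarrow> B \<in> unitary_group \<Longrightarrow> A ** B \<in> unitary_group"
proof -
  assume a: "A \<in> unitary_group" and b: "B \<in> unitary_group"
  have "adj (A ** B) ** (A ** B) = adj B ** (adj A ** A) ** B"
    by (simp add: adj_mult matrix_mul_assoc)
  also have "\<dots> = mat 1" using a b by (simp add: unitary_group_def)
  finally show ?thesis by (simp add: unitary_group_def)
qed

lemma unitary_adj: "A \<in> unitary_group \<Longrightarrow> adj A \<in> unitary_group"
  using unitary_right by (simp add: unitary_group_def)

lemma cont_mult: "continuous_on UNIV (\<lambda>x::complex^'n^'n. g ** x)"
  unfolding matrix_matrix_mult_def
  by (intro continuous_intros)

lemma meas_mult: "(\<lambda>x::complex^'n^'n. g ** x) \<in> borel_measurable borel"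
  by (rule borel_measurable_continuous_onI[OF cont_mult])

lemma haar_distr:
  assumes "haar_prob \<nu>" "g \<in> unitary_group"
  shows "distr \<nu> borel (\<lambda>x::complex^'n^'n. g ** x) = \<nu>"
proof (rule measure_eqI)
  have s: "sets \<nu> = sets borel" using assms unfolding haar_prob_def by auto
  then have sp: "space \<nu> = UNIV" using sets_eq_imp_space_eq by fastforce
  show "sets (distr \<nu> borel (\<lambda>x. g ** x)) = sets \<nu>" using s by simp
  fix A assume "A \<in> sets (distr \<nu> borel (\<lambda>x. g ** x))"
  then have A: "A \<in> sets borel" by simp
  have m: "(\<lambda>x. g ** x) \<in> measurable \<nu> borel"
    using meas_mult measurable_cong_sets[OF s refl] by blast
  show "emeasure (distr \<nu> borel (\<lambda>x. g ** x)) A = emeasure \<nu> A"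
    using A m assms sp by (simp add: emeasure_distr haar_prob_def)
qed

lemma haar_integral:
  assumes "haar_prob \<nu>" "g \<in> unitary_group" "integrable \<nu> (h::_ \<Rightarrow> real)"
  shows "integrable \<nu> (\<lambda>x. h (g ** x))" "(\<integral>x. h (g ** x) \<partial>\<nu>) = integral\<^sup>L \<nu> h"
proof -
  have s: "sets \<nu> = sets borel" using assms unfolding haar_prob_def by auto
  have m: "(\<lambda>x. g ** x) \<in> measurable \<nu> borel"
    using meas_mult measurable_cong_sets[OF s refl] by blast
  have hm: "h \<in> borel_measurable borel"
    using assms(3) measurable_cong_sets[OF s refl] by auto
  have hd: "integrable (distr \<nu> borel (\<lambda>x. g ** x)) h" using haar_distr[OF assms(1,2)] assms(3) by simp
  show "integrable \<nu> (\<lambda>x. h (g ** x))"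
    using hd integrable_distr_eq[OF m hm] by simp
  show "(\<integral>x. h (g ** x) \<partial>\<nu>) = integral\<^sup>L \<nu> h"
    using integral_distr[OF m hm] haar_distr[OF assms(1,2)] by simp
qed


definition Q :: "(complex^'n^'n \<Rightarrow> real) \<Rightarrow> nat \<Rightarrow> (nat \<Rightarrow> complex^'n^'n) \<Rightarrow> (nat \<Rightarrow> real) \<Rightarrow> real" where
  "Q h n a w = (\<Sum>i<n. \<Sum>j<n. w i * w j * h (adj (a i) ** a j))"

lemma h_sym:
  assumes pd: "pos_def_on_U (\<lambda>x. complex_of_real (h x))" and g: "g \<in> unitary_group"
  shows "h (adj g) = h g"
proof -
  define gg where "gg = (\<lambda>i::nat. if i = 0 then mat 1 else g)"
  define c where "c = (\<lambda>i::nat. if i = 0 then 1 else \<i>)"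
  have "\<forall>i<2. gg i \<in> unitary_group" using g by (auto simp: gg_def)
  then have "Im (\<Sum>i<2. \<Sum>j<2. cnj (c i) * complex_of_real (h (adj (gg i) ** gg j)) * c j) = 0"
    using pd[unfolded pos_def_on_U_def Let_def, THEN conjunct2, rule_format, of 2 gg c] by blast
  moreover have "\<And>F::nat\<Rightarrow>nat\<Rightarrow>complex. (\<Sum>i<2. \<Sum>j<2. F i j) = F 0 0 + F 0 1 + F 1 0 + F 1 1"
    by (simp add: numeral_2_eq_2)
  ultimately have "Im (cnj (c 0) * complex_of_real (h (adj (gg 0) ** gg 0)) * c 0
     + cnj (c 0) * complex_of_real (h (adj (gg 0) ** gg 1)) * c 1
     + cnj (c 1) * complex_of_real (h (adj (gg 1) ** gg 0)) * c 0
     + cnj (c 1) * complex_of_real (h (adj (gg 1) ** gg 1)) * c 1) = 0" by simp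
  then show ?thesis
    by (simp add: gg_def c_def)
qed

lemma Q_nonneg:
  assumes pd: "pos_def_on_U (\<lambda>x. complex_of_real (h x))" and a: "\<forall>i<n. a i \<in> unitary_group"
  shows "0 \<le> Q h n a w"
proof -
  have "0 \<le> Re (\<Sum>i<n. \<Sum>j<n. cnj (complex_of_real (w i)) * complex_of_real (h (adj (a i) ** a j)) * complex_of_real (w j))"
    using pd[unfolded pos_def_on_U_def Let_def, THEN conjunct2, rule_format, of n a "\<lambda>i. complex_of_real (w i)"] a by blast
  then show ?thesis by (simp add: Q_def mult_ac)
qed

lemma Q_Suc: "Q h (Suc n) a w = Q h n a w + 2 * (\<Sum>i<n. w i * w n * h (adj (a i) ** a n))
   + w n * w n * h (adj (a n) ** a n)" if "\<And>i. i < n \<Longrightarrow> h (adj (a n) ** a i) = h (adj (a i) ** a n)"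
proof -
  have "(\<Sum>j<n. w n * w j * h (adj (a n) ** a j)) = (\<Sum>i<n. w i * w n * h (adj (a i) ** a n))"
    using that by (intro sum.cong) auto
  have "Q h (Suc n) a w = Q h n a w + (\<Sum>i<n. w i * w n * h (adj (a i) ** a n))
     + (\<Sum>j<n. w n * w j * h (adj (a n) ** a j)) + w n * w n * h (adj (a n) ** a n)"
    unfolding Q_def by (simp only: sum.lessThan_Suc sum.distrib add.assoc)
  with \<open>(\<Sum>j<n. _) = _\<close> show ?thesis by simp
qed


lemma AE_unitary:
  assumes "haar_prob \<nu>"
  shows "AE y in \<nu>. y \<in> unitary_group"
proof -
  interpret prob_space \<nu> using assms by (simp add: haar_prob_def)
  have "prob unitary_group = 1" using assms by (simp add: haar_prob_def measure_def)
  then show ?thesis by (rule AE_prob_1)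
qed

lemma key:
  assumes haar: "haar_prob \<nu>" and pd: "pos_def_on_U (\<lambda>x. complex_of_real (h x))"
    and int1: "integral\<^sup>L \<nu> h = 1"
  shows "(\<forall>i<n. a i \<in> unitary_group) \<Longrightarrow> 0 \<le> Q h n a w - 2 * s * real M * (\<Sum>i<n. w i)
     + s^2 * (real M * h (mat 1) + real M * (real M - 1))"
proof (induction M arbitrary: n a w)
  case 0
  then show ?case using Q_nonneg[OF pd] by simp
next
  case (Suc M)
  interpret prob_space \<nu> using haar by (simp add: haar_prob_def)
  have hint: "integrable \<nu> h" using int1 not_integrable_integral_eq by fastforce
  let ?h0 = "h (mat 1)" and ?R = "real M"
  define C where "C = Q h n a w + s^2 * ?h0 - 2 * s * ?R * ((\<Sum>i<n. w i) - s)
      + s^2 * (?R * ?h0 + ?R * (?R - 1))"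
  have G: "0 \<le> C - 2 * s * (\<Sum>i<n. w i * h (adj (a i) ** y))" if y: "y \<in> unitary_group" for y
  proof -
    let ?a = "a(n := y)" and ?w = "w(n := - s)"
    have au: "\<forall>i<Suc n. ?a i \<in> unitary_group" using Suc.prems y by (auto simp: less_Suc_eq)
    have IH: "0 \<le> Q h (Suc n) ?a ?w - 2 * s * ?R * (\<Sum>i<Suc n. ?w i)
        + s^2 * (?R * ?h0 + ?R * (?R - 1))" using Suc.IH[OF au] .
    have sym: "h (adj (?a n) ** ?a i) = h (adj (?a i) ** ?a n)" if "i < n" for i
    proof -
      have ai: "a i \<in> unitary_group" using Suc.prems that by auto
      have "adj y ** a i = adj (adj (a i) ** y)" by (simp add: adj_mult)
      then show ?thesis using that h_sym[OF pd unitary_mult[OF unitary_adj[OF ai] y]] by simp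
    qed
    have Qeq: "Q h n ?a ?w = Q h n a w" unfolding Q_def by (intro sum.cong) auto
    have s1: "(\<Sum>i<n. ?w i * ?w n * h (adj (?a i) ** ?a n)) = - s * (\<Sum>i<n. w i * h (adj (a i) ** y))"
      by (simp add: sum_distrib_left) (intro sum.cong, auto)
    have s2: "(\<Sum>i<Suc n. ?w i) = (\<Sum>i<n. w i) - s"
      by simp
    have yy: "h (adj y ** y) = ?h0" using y by (simp add: unitary_group_def)
    show ?thesis using IH Q_Suc[where h=h and n=n and a="a(n := y)" and w="w(n := - s)", OF sym] Qeq s1 s2 yy unfolding C_def
      by (simp add: algebra_simps power2_eq_square)
  qed
  have ints: "\<And>i. i < n \<Longrightarrow> integrable \<nu> (\<lambda>y. h (adj (a i) ** y))"
    and intv: "\<And>i. i < n \<Longrightarrow> (\<integral>y. h (adj (a i) ** y) \<partial>\<nu>) = 1"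
    using haar_integral[OF haar unitary_adj hint] Suc.prems int1 by auto
  have intG: "integrable \<nu> (\<lambda>y. C - 2 * s * (\<Sum>i<n. w i * h (adj (a i) ** y)))"
    using ints by (intro Bochner_Integration.integrable_diff Bochner_Integration.integrable_mult_right Bochner_Integration.integrable_sum integrable_const) auto
  have "0 \<le> (\<integral>y. C - 2 * s * (\<Sum>i<n. w i * h (adj (a i) ** y)) \<partial>\<nu>)"
    using AE_unitary[OF haar] G by (intro integral_nonneg_AE) (auto elim: AE_mp)
  also have "\<dots> = C - 2 * s * (\<Sum>i<n. w i)"
  proof -
    have "(\<integral>y. C - 2 * s * (\<Sum>i<n. w i * h (adj (a i) ** y)) \<partial>\<nu>)
      = C - 2 * s * (\<integral>y. (\<Sum>i<n. w i * h (adj (a i) ** y)) \<partial>\<nu>)"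
      using ints by (subst Bochner_Integration.integral_diff) (auto intro!: Bochner_Integration.integrable_sum simp: prob_space)
    also have "(\<integral>y. (\<Sum>i<n. w i * h (adj (a i) ** y)) \<partial>\<nu>) = (\<Sum>i<n. w i)"
      using ints intv by (subst Bochner_Integration.integral_sum) auto
    finally show ?thesis .
  qed
  finally show ?case unfolding C_def by (simp add: algebra_simps power2_eq_square)
qed


lemma arith_final:
  fixes q N h0 :: real
  assumes N: "0 < N" and q: "q \<le> N * h0"
    and M: "\<And>M::nat. M \<ge> 1 \<Longrightarrow> 0 \<le> q - 2 * (N / real M) * real M * N
      + (N / real M)^2 * (real M * h0 + real M * (real M - 1))"
  shows "N \<le> h0"
proof (rule ccontr)
  assume "\<not> N \<le> h0"
  then have lt: "h0 < N" by simp
  have ineq: "0 \<le> h0 - N + N * (h0 - 1) / real M" if "M \<ge> 1" for M :: nat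
  proof -
    have Mp: "real M > 0" using that by simp
    have "0 \<le> q - 2 * (N / real M) * real M * N
      + (N / real M)^2 * (real M * h0 + real M * (real M - 1))" using M[OF that] .
    also have "\<dots> = q - N^2 + N^2 * (h0 - 1) / real M"
      using Mp by (simp add: field_simps power2_eq_square)
    finally have "0 \<le> N * h0 - N^2 + N^2 * (h0 - 1) / real M" using q by linarith
    also have "\<dots> = N * (h0 - N + N * (h0 - 1) / real M)"
      by (simp add: field_simps power2_eq_square)
    finally show ?thesis using N by (simp add: zero_le_mult_iff)
  qed
  show False
  proof (cases "h0 \<le> 1")
    case True
    have "N * (h0 - 1) \<le> 0" using N True by (simp add: mult_nonneg_nonpos)
    then show False using ineq[of 1] lt by simp
  next
    case False
    obtain M :: nat where Mg: "real M > N * (h0 - 1) / (N - h0)" using reals_Archimedean2 by blast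
    have "N * (h0 - 1) / (N - h0) > 0" using False lt N by simp
    then have M1: "M \<ge> 1" using Mg by (cases M) auto
    have Mp: "real M > 0" using M1 by simp
    have "N * (h0 - 1) < real M * (N - h0)" using Mg lt by (simp add: field_simps)
    then have "N * (h0 - 1) / real M < N - h0" using Mp by (simp add: field_simps)
    then show False using ineq[OF M1] by linarith
  qed
qed


definition bb :: "(complex^'n) set \<Rightarrow> 'n \<Rightarrow> complex^'n" where
  "bb B = (SOME f. bij_betw f (UNIV::'n set) B)"

lemma bb_bij: "orthonormal_basis (B :: (complex^'n) set) \<Longrightarrow> bij_betw (bb B) UNIV B"
proof -
  assume "orthonormal_basis B"
  then have "finite B" "card B = CARD('n)" by (auto simp: orthonormal_basis_def)
  then have "\<exists>f. bij_betw f (UNIV::'n set) B" by (intro finite_same_card_bij) auto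
  then show ?thesis unfolding bb_def by (rule someI_ex)
qed

definition Umat :: "(complex^'n) set \<Rightarrow> complex^'n^'n" where
  "Umat B = (\<chi> r i. bb B i $ r)"

lemma Umat_prod: "(adj (Umat B) ** Umat B') $ i $ j = cinner (bb B i) (bb B' j)"
  by (simp add: adj_def Umat_def matrix_matrix_mult_def cinner_def)

lemma Umat_unitary:
  assumes "orthonormal_basis B" shows "Umat B \<in> unitary_group"
proof -
  have bij: "bij_betw (bb B) UNIV B" using bb_bij[OF assms] .
  have "adj (Umat B) ** Umat B = mat 1"
  proof (simp add: vec_eq_iff Umat_prod, intro allI)
    fix i j
    have inB: "bb B i \<in> B" "bb B j \<in> B" using bij by (auto simp: bij_betw_def)
    have "(bb B i = bb B j) = (i = j)" using bij by (auto simp: bij_betw_def inj_on_def)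
    moreover have on: "\<forall>v\<in>B. \<forall>w\<in>B. cinner v w = (if v = w then 1 else 0)"
      using assms unfolding orthonormal_basis_def by (elim conjE)
    moreover have "mat 1 $ i $ j = (if i = j then 1 else (0::complex))" by (simp add: mat_def)
    ultimately show "cinner (bb B i) (bb B j) = mat 1 $ i $ j"
      using on[rule_format, OF inB] by simp
  qed
  then show ?thesis by (simp add: unitary_group_def)
qed

lemma Umat_hadamard:
  fixes C :: "(complex^'n) set set"
  assumes "mutually_unbiased C" "B \<in> C" "B' \<in> C" "B \<noteq> B'"
  shows "adj (Umat B) ** Umat B' \<in> hadamard_set"
proof -
  have ob: "orthonormal_basis B" "orthonormal_basis B'" using assms by (auto simp: mutually_unbiased_def)
  have u: "adj (Umat B) ** Umat B' \<in> unitary_group"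
    using unitary_mult[OF unitary_adj[OF Umat_unitary[OF ob(1)]] Umat_unitary[OF ob(2)]] .
  have "cmod (cinner (bb B i) (bb B' j)) = 1 / sqrt (real CARD('n))" for i j
  proof -
    have "bb B i \<in> B" "bb B' j \<in> B'" using bb_bij[OF ob(1)] bb_bij[OF ob(2)] by (auto simp: bij_betw_def)
    then show ?thesis
      using assms(1)[unfolded mutually_unbiased_def, THEN conjunct2, rule_format, OF assms(2,3,4)] by blast
  qed
  then show ?thesis using u by (simp add: hadamard_set_def Umat_prod)
qed

lemma bound:
  fixes \<nu> :: "(complex^'n^'n) measure"
  assumes haar: "haar_prob \<nu>" and pd: "pos_def_on_U (\<lambda>x. complex_of_real (h x))"
    and hH: "\<forall>H\<in>hadamard_set. h H \<le> 0" and int1: "integral\<^sup>L \<nu> h = 1"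
    and fin: "finite C" and mub: "mutually_unbiased (C :: (complex^'n) set set)"
  shows "real (card C) \<le> h (mat 1)"
proof -
  let ?N = "card C"
  obtain e where e: "bij_betw e {0..<?N} C" using ex_bij_betw_nat_finite[OF fin] by blast
  define U where "U k = Umat (e k)" for k
  have eC: "k < ?N \<Longrightarrow> e k \<in> C" for k using e by (auto simp: bij_betw_def)
  have Uu: "\<forall>i<?N. U i \<in> unitary_group"
    using eC mub by (auto simp: U_def mutually_unbiased_def intro!: Umat_unitary)
  have h0: "0 \<le> h (mat 1)"
    using key[OF haar pd int1, of 0 U "\<lambda>_. 1" 1 1] by (simp add: Q_def)
  show ?thesis
  proof (cases "?N = 0")
    case True then show ?thesis using h0 by simp
  next
    case False
    have row: "(\<Sum>l<?N. h (adj (U k) ** U l)) \<le> h (mat 1)" if k: "k < ?N" for k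
    proof -
      have "(\<Sum>l<?N. h (adj (U k) ** U l)) = h (adj (U k) ** U k) + (\<Sum>l\<in>{..<?N} - {k}. h (adj (U k) ** U l))"
        using k by (subst sum.remove[of _ k]) auto
      also have "h (adj (U k) ** U k) = h (mat 1)" using Uu k by (simp add: unitary_group_def)
      also have "(\<Sum>l\<in>{..<?N} - {k}. h (adj (U k) ** U l)) \<le> 0"
      proof (rule sum_nonpos)
        fix l assume l: "l \<in> {..<?N} - {k}"
        have "e k \<noteq> e l" using e k l by (auto simp: bij_betw_def inj_on_def)
        then have "adj (U k) ** U l \<in> hadamard_set"
          unfolding U_def using Umat_hadamard[OF mub eC[OF k] eC] l by auto
        then show "h (adj (U k) ** U l) \<le> 0" using hH by blast
      qed
      finally show ?thesis by simp
    qed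
    have q: "Q h ?N U (\<lambda>_. 1) \<le> real ?N * h (mat 1)"
    proof -
      have "Q h ?N U (\<lambda>_. 1) = (\<Sum>k<?N. \<Sum>l<?N. h (adj (U k) ** U l))" by (simp add: Q_def)
      also have "\<dots> \<le> (\<Sum>k<?N. h (mat 1))" using row by (intro sum_mono) auto
      finally show ?thesis by simp
    qed
    show ?thesis
    proof (rule arith_final[OF _ q])
      show "0 < real ?N" using False by simp
      fix M :: nat assume "M \<ge> 1"
      show "0 \<le> Q h ?N U (\<lambda>_. 1) - 2 * (real ?N / real M) * real M * real ?N
        + (real ?N / real M)^2 * (real M * h (mat 1) + real M * (real M - 1))"
        using key[OF haar pd int1 Uu, of "\<lambda>_. 1" "real ?N / real M" M] by simp
    qed
  qed
qed

theorem corollary1p9: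
  fixes \<nu> :: "(complex^'n^'n) measure"
  assumes "CARD('n) \<ge> 2"
    and "haar_prob \<nu>"
  shows "max_mub TYPE('n) \<le> B_bound \<nu>"
  unfolding max_mub_def B_bound_def
proof (rule Sup_least, rule le_Inf_iff[THEN iffD2], intro ballI)
  fix x y assume xm: "x \<in> {ereal (real (card C)) | C :: (complex^'n) set set. finite C \<and> mutually_unbiased C}"
    and ym: "y \<in> {ereal (h (mat 1)) | h :: complex^'n^'n \<Rightarrow> real.
      pos_def_on_U (\<lambda>x. complex_of_real (h x)) \<and>
      (\<forall>H\<in>hadamard_set. h H \<le> 0) \<and> integral\<^sup>L \<nu> h = 1}"
  from xm have "\<exists>C :: (complex^'n) set set. x = ereal (real (card C)) \<and> finite C \<and> mutually_unbiased C"
    unfolding mem_Collect_eq .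
  then obtain C :: "(complex^'n) set set" where C: "x = ereal (real (card C))" "finite C" "mutually_unbiased C"
    by (elim exE conjE)
  from ym have "\<exists>h :: complex^'n^'n \<Rightarrow> real. y = ereal (h (mat 1)) \<and> pos_def_on_U (\<lambda>x. complex_of_real (h x)) \<and>
      (\<forall>H\<in>hadamard_set. h H \<le> 0) \<and> integral\<^sup>L \<nu> h = 1"
    unfolding mem_Collect_eq .
  then obtain h :: "complex^'n^'n \<Rightarrow> real" where h: "y = ereal (h (mat 1))" "pos_def_on_U (\<lambda>x. complex_of_real (h x))"
    "\<forall>H\<in>hadamard_set. h H \<le> 0" "integral\<^sup>L \<nu> h = 1" by (elim exE conjE)
  have "real (card C) \<le> h (mat 1)" by (rule bound[OF assms(2) h(2,3,4) C(2,3)])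
  then show "x \<le> y" unfolding C(1) h(1) by (rule ereal_less_eq(3)[THEN iffD2])
qed

end
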